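(* Let $G$ be an almost Abelian Lie group with Lie algebra $\mathfrak g=\mathbb{R}\xi\ltimes_AV$, where $V$ is an Abelian ideal of codimension one and $[\xi,X]=AX$ for $X\in V$, with $A\in\mathfrak{gl}(V)$, $A\neq0$. Equip $G$ with a left-invariant Riemannian metric for which $\xi$ is a unit vector orthogonal to $V$, and write $A=A^{sy}+A^{sk}$ with $A^{sy}$ symmetric and $A^{sk}$ skew-symmetric with respect to the inner product on $V$. If $G$ is not flat, then its $0$-nullity distribution is the left-invariant distribution determined by the subspace $\ker A^{sy}\cap (A^{sk})^{-1}(\ker A^{sy})$ of $V$, where $(A^{sk})^{-1}(\ker A^{sy})=\{X\in V: A^{sk}X\in\ker A^{sy}\}$.
   Context: Curvature convention: $R(X,Y)Z=\nabla_X\nabla_YZ-\nabla_Y\nabla_XZ-\nabla_{[X,Y]}Z$. The $0$-nullity distribution is $\mathcal N_0|_p=\{z\in T_pM: R_p(x,y)z=0\ \forall x,y\in T_pM\}$. An almost Abelian Lie group is a non-Abelian connected real Lie group whose Lie algebra has a codimension one Abelian ideal. *)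

theory Defs
  imports "HOL-Analysis.Analysis"
begin

text \<open>A left-invariant metric on a Lie group is encoded by
  its Lie algebra g (a Euclidean space, inner product = metric at the identity) with
  bracket br. The Levi-Civita connection on left-invariant fields is given by the
  Koszul formula, and curvature / nullity of left-invariant fields at the identity
  determine the left-invariant tensor and distribution.\<close>

definition lc_conn :: "('g::euclidean_space \<Rightarrow> 'g \<Rightarrow> 'g) \<Rightarrow> 'g \<Rightarrow> 'g \<Rightarrow> 'g" where
  "lc_conn br x y =
     (\<Sum>b\<in>Basis. ((br x y \<bullet> b - br y b \<bullet> x + br b x \<bullet> y) / 2) *\<^sub>R b)"

definition curv :: "('g::euclidean_space \<Rightarrow> 'g \<Rightarrow> 'g) \<Rightarrow> 'g \<Rightarrow> 'g \<Rightarrow> 'g \<Rightarrow> 'g" where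
  "curv br x y z = lc_conn br x (lc_conn br y z) - lc_conn br y (lc_conn br x z)
                   - lc_conn br (br x y) z"

definition nullity0 :: "('g::euclidean_space \<Rightarrow> 'g \<Rightarrow> 'g) \<Rightarrow> 'g set" where
  "nullity0 br = {z. \<forall>x y. curv br x y z = 0}"

definition flat :: "('g::euclidean_space \<Rightarrow> 'g \<Rightarrow> 'g) \<Rightarrow> bool" where
  "flat br \<longleftrightarrow> (\<forall>x y z. curv br x y z = 0)"

text \<open>Almost Abelian Lie algebra R xi \<ltimes>_A V, realised on real \<times> V with xi = (1,0);
  the product inner product makes xi a unit vector orthogonal to V = {0} \<times> V.\<close>

definition aa_bracket :: "('v::euclidean_space \<Rightarrow> 'v) \<Rightarrow> real \<times> 'v \<Rightarrow> real \<times> 'v \<Rightarrow> real \<times> 'v" where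
  "aa_bracket A p q = (0, fst p *\<^sub>R A (snd q) - fst q *\<^sub>R A (snd p))"

definition sym_part :: "('v::euclidean_space \<Rightarrow> 'v) \<Rightarrow> 'v \<Rightarrow> 'v" where
  "sym_part A x = (1/2) *\<^sub>R (A x + adjoint A x)"

definition skew_part :: "('v::euclidean_space \<Rightarrow> 'v) \<Rightarrow> 'v \<Rightarrow> 'v" where
  "skew_part A x = (1/2) *\<^sub>R (A x - adjoint A x)"

end

theory Submission
  imports Defs
begin

lemma S_lin: assumes "linear A" shows "linear (sym_part A)"
proof -
  have l: "linear (adjoint A)" using adjoint_linear[OF assms] .
  show ?thesis unfolding sym_part_def
    by (rule linearI) (simp_all add: linear_add[OF assms] linear_add[OF l] linear_scale[OF assms] linear_scale[OF l] algebra_simps)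
qed

lemma K_lin: assumes "linear A" shows "linear (skew_part A)"
proof -
  have l: "linear (adjoint A)" using adjoint_linear[OF assms] .
  show ?thesis unfolding skew_part_def
    by (rule linearI) (simp_all add: linear_add[OF assms] linear_add[OF l] linear_scale[OF assms] linear_scale[OF l] algebra_simps)
qed

lemma S_sym: assumes "linear A" shows "sym_part A x \<bullet> y = x \<bullet> sym_part A y"
  unfolding sym_part_def using adjoint_clauses[OF assms]
  by (simp add: inner_add_left inner_add_right inner_commute)

lemma K_skew: assumes "linear A" shows "skew_part A x \<bullet> y = - (x \<bullet> skew_part A y)"
  unfolding skew_part_def using adjoint_clauses[OF assms]
  by (simp add: inner_diff_left inner_diff_right inner_commute field_simps)

lemma A_split: "A x = sym_part A x + skew_part A x"
proof -
  have "(1/2) *\<^sub>R (A x + adjoint A x) + (1/2) *\<^sub>R (A x - adjoint A x) = ((1/2) + (1/2)) *\<^sub>R A x"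
    by (simp only: scaleR_add_right scaleR_diff_right scaleR_add_left) simp
  then show ?thesis unfolding sym_part_def skew_part_def by simp
qed

lemma lc_formula: assumes "linear A"
  shows "lc_conn (aa_bracket A) (a,X) (b,Y) = (sym_part A X \<bullet> Y, a *\<^sub>R skew_part A Y - b *\<^sub>R sym_part A X)"
proof -
  let ?S = "sym_part A" and ?K = "skew_part A"
  let ?N = "(sym_part A X \<bullet> Y, a *\<^sub>R skew_part A Y - b *\<^sub>R sym_part A X)"
  have key: "(aa_bracket A (a,X) (b,Y) \<bullet> u - aa_bracket A (b,Y) u \<bullet> (a,X) + aa_bracket A u (a,X) \<bullet> (b,Y)) / 2 = ?N \<bullet> u" for u
  proof -
    obtain c Z where u: "u = (c,Z)" by (cases u)
    have sA: "A p = ?S p + ?K p" for p by (rule A_split)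
    have s1: "?S p \<bullet> q = p \<bullet> ?S q" for p q by (rule S_sym[OF assms])
    have k1: "?K p \<bullet> q = - (p \<bullet> ?K q)" for p q by (rule K_skew[OF assms])
    have s2: "p \<bullet> ?S q = q \<bullet> ?S p" for p q using s1 by (simp add: inner_commute)
    have k2: "p \<bullet> ?K q = - (q \<bullet> ?K p)" for p q using k1 by (metis inner_commute)
    show ?thesis unfolding u aa_bracket_def
      apply (simp add: inner_prod_def sA inner_add_left inner_add_right inner_diff_left inner_diff_right)
      apply (simp add: s1 k1)
      apply (simp add: s2[of Z X] s2[of Y X] s2[of Z Y] k2[of Z X] k2[of Y X] k2[of Z Y])
      apply (simp add: algebra_simps)
      done
  qed
  have "lc_conn (aa_bracket A) (a,X) (b,Y) = (\<Sum>u\<in>Basis. (?N \<bullet> u) *\<^sub>R u)"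
    unfolding lc_conn_def using key by simp
  also have "\<dots> = ?N" by (rule euclidean_representation)
  finally show ?thesis .
qed

definition MM :: "('v::euclidean_space \<Rightarrow> 'v) \<Rightarrow> 'v \<Rightarrow> 'v" where
  "MM A v = sym_part A (sym_part A v) + sym_part A (skew_part A v) - skew_part A (sym_part A v)"

lemma curv_formula: assumes "linear A"
  shows "curv (aa_bracket A) (a,X) (b,Y) (c,Z) =
    (b * (MM A X \<bullet> Z) - a * (MM A Y \<bullet> Z),
     (c*a) *\<^sub>R MM A Y - (c*b) *\<^sub>R MM A X + (sym_part A X \<bullet> Z) *\<^sub>R sym_part A Y - (sym_part A Y \<bullet> Z) *\<^sub>R sym_part A X)"
proof -
  let ?S = "sym_part A" and ?K = "skew_part A"
  have sA: "A p = ?S p + ?K p" for p by (rule A_split)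
  have s1: "?S p \<bullet> q = p \<bullet> ?S q" for p q by (rule S_sym[OF assms])
  have k1: "?K p \<bullet> q = - (p \<bullet> ?K q)" for p q by (rule K_skew[OF assms])
  have s2: "p \<bullet> ?S q = q \<bullet> ?S p" for p q using s1 by (simp add: inner_commute)
  have k2: "p \<bullet> ?K q = - (q \<bullet> ?K p)" for p q using k1 by (metis inner_commute)
  have kk: "?S p \<bullet> ?K Z = - (?K (?S p) \<bullet> Z)" for p using k1 by simp
  have br: "aa_bracket A (a,X) (b,Y) = (0, a *\<^sub>R A Y - b *\<^sub>R A X)" by (simp add: aa_bracket_def)
  note LS = linear_add[OF S_lin[OF assms]] linear_diff[OF S_lin[OF assms]] linear_scale[OF S_lin[OF assms]]
  note LK = linear_add[OF K_lin[OF assms]] linear_diff[OF K_lin[OF assms]] linear_scale[OF K_lin[OF assms]]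
  show ?thesis
    unfolding curv_def br
    apply (simp add: lc_formula[OF assms] LS LK sA MM_def)
    apply (intro conjI)
     apply (simp add: inner_add_left inner_add_right inner_diff_left inner_diff_right
        kk[of X] kk[of Y] inner_commute[of "?S Y" "?S X"] algebra_simps)
    apply (simp add: algebra_simps)
    done
qed

lemma trace_zero:
  fixes S K :: "'a::euclidean_space \<Rightarrow> 'a"
  assumes s: "\<And>p q. S p \<bullet> q = p \<bullet> S q" and k: "\<And>p q. K p \<bullet> q = - (p \<bullet> K q)"
  shows "(\<Sum>b\<in>Basis. S b \<bullet> K b) = 0"
proof -
  let ?T = "\<Sum>b\<in>Basis. S b \<bullet> K b"
  have "?T = (\<Sum>b\<in>Basis. \<Sum>c\<in>Basis. (S b \<bullet> c) * (K b \<bullet> c))"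
    by (subst euclidean_inner) simp
  also have "\<dots> = (\<Sum>c\<in>Basis. \<Sum>b\<in>Basis. (S b \<bullet> c) * (K b \<bullet> c))"
    by (rule sum.swap)
  also have "\<dots> = (\<Sum>c\<in>Basis. \<Sum>b\<in>Basis. - ((S c \<bullet> b) * (K c \<bullet> b)))"
  proof (intro sum.cong refl)
    fix b c :: 'a
    have 1: "S b \<bullet> c = S c \<bullet> b" using s by (simp add: inner_commute)
    have 2: "K b \<bullet> c = - (K c \<bullet> b)" using k by (metis inner_commute)
    show "(S b \<bullet> c) * (K b \<bullet> c) = - ((S c \<bullet> b) * (K c \<bullet> b))" by (simp add: 1 2)
  qed
  also have "\<dots> = - (\<Sum>c\<in>Basis. \<Sum>b\<in>Basis. (S c \<bullet> b) * (K c \<bullet> b))"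
    by (simp add: sum_negf)
  also have "\<dots> = - ?T"
    by (subst (2) euclidean_inner) simp
  finally show ?thesis by simp
qed

lemma M_zero_S_zero:
  assumes "linear A" and M0: "\<And>v. MM A v = 0"
  shows "sym_part A = (\<lambda>v. 0)"
proof -
  let ?S = "sym_part A" and ?K = "skew_part A"
  have s1: "?S p \<bullet> q = p \<bullet> ?S q" for p q by (rule S_sym[OF assms(1)])
  have k1: "?K p \<bullet> q = - (p \<bullet> ?K q)" for p q by (rule K_skew[OF assms(1)])
  have SS: "?S (?S v) = ?K (?S v) - ?S (?K v)" for v
    using M0[of v] unfolding MM_def by (simp add: algebra_simps)
  have "(\<Sum>b\<in>Basis. ?S b \<bullet> ?S b) = (\<Sum>b\<in>Basis. ?S (?S b) \<bullet> b)"
    by (intro sum.cong refl) (simp add: s1)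
  also have "\<dots> = (\<Sum>b\<in>Basis. - 2 * (?S b \<bullet> ?K b))"
  proof (intro sum.cong refl)
    fix b
    have 1: "b \<bullet> ?S (?K b) = - (b \<bullet> ?K (?S b))"
      using s1[of b "?K b"] k1[of "?S b" b] by (simp add: inner_commute)
    have 2: "b \<bullet> ?K (?S b) = - (?S b \<bullet> ?K b)"
      using k1[of "?S b" b] by (simp add: inner_commute)
    show "?S (?S b) \<bullet> b = - 2 * (?S b \<bullet> ?K b)"
      by (simp add: SS inner_diff_left inner_diff_right inner_commute[of _ b] 1 2)
  qed
  also have "\<dots> = - 2 * (\<Sum>b\<in>Basis. ?S b \<bullet> ?K b)"
    by (simp add: sum_distrib_left)
  also have "\<dots> = 0" using trace_zero[of ?S ?K] s1 k1 by simp
  finally have z: "(\<Sum>b\<in>Basis. ?S b \<bullet> ?S b) = 0" .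
  have "\<forall>b\<in>Basis. ?S b \<bullet> ?S b = 0"
    using sum_nonneg_eq_0_iff[of Basis "\<lambda>b. ?S b \<bullet> ?S b"] z by simp
  then have "\<And>b. b \<in> Basis \<Longrightarrow> ?S b = (\<lambda>v. 0) b" by simp
  then show ?thesis
    by (rule linear_eq_stdbasis[OF S_lin[OF assms(1)] linear_zero])
qed

lemma M_sym: assumes "linear A" shows "MM A X \<bullet> Z = X \<bullet> MM A Z"
proof -
  let ?S = "sym_part A" and ?K = "skew_part A"
  have s1: "?S p \<bullet> q = p \<bullet> ?S q" for p q by (rule S_sym[OF assms(1)])
  have k1: "?K p \<bullet> q = - (p \<bullet> ?K q)" for p q by (rule K_skew[OF assms(1)])
  show ?thesis unfolding MM_def
    by (simp add: inner_add_left inner_add_right inner_diff_left inner_diff_right s1 k1)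
qed

theorem lemma4p1:
  fixes A :: "'v::euclidean_space \<Rightarrow> 'v"
  assumes "linear A"
    and "A \<noteq> (\<lambda>x. 0)"
    and "\<not> flat (aa_bracket A)"
  shows "nullity0 (aa_bracket A) =
    {(0, X) | X. sym_part A X = 0 \<and> sym_part A (skew_part A X) = 0}"
proof -
  let ?S = "sym_part A" and ?K = "skew_part A" and ?M = "MM A"
  have s1: "?S p \<bullet> q = p \<bullet> ?S q" for p q by (rule S_sym[OF assms(1)])
  have k1: "?K p \<bullet> q = - (p \<bullet> ?K q)" for p q by (rule K_skew[OF assms(1)])
  have S0: "?S 0 = 0" by (rule linear_0[OF S_lin[OF assms(1)]])
  have K0: "?K 0 = 0" by (rule linear_0[OF K_lin[OF assms(1)]])
  note CF = curv_formula[OF assms(1)]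
  show ?thesis
  proof (intro set_eqI iffI)
    fix z assume "z \<in> nullity0 (aa_bracket A)"
    then have nz: "curv (aa_bracket A) x y z = 0" for x y unfolding nullity0_def mem_Collect_eq by blast
    obtain c Z where zdef: "z = (c, Z)" by (cases z)
    have h1: "b * (?M X \<bullet> Z) - a * (?M Y \<bullet> Z) = 0" for a b X Y
      using nz[of "(a,X)" "(b,Y)"] unfolding zdef CF by (simp add: zero_prod_def)
    have h2: "(c*a) *\<^sub>R ?M Y - (c*b) *\<^sub>R ?M X + (?S X \<bullet> Z) *\<^sub>R ?S Y - (?S Y \<bullet> Z) *\<^sub>R ?S X = 0" for a b X Y
      using nz[of "(a,X)" "(b,Y)"] unfolding zdef CF by (simp add: zero_prod_def)
    have c0: "c = 0"
    proof (rule ccontr)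
      assume "c \<noteq> 0"
      have "?M Y = 0" for Y using h2[where a=1 and b=0 and X=0 and Y=Y] \<open>c \<noteq> 0\<close> by (simp add: S0)
      then have "?S = (\<lambda>v. 0)" by (rule M_zero_S_zero[OF assms(1)])
      then have "\<And>v. ?M v = 0" unfolding MM_def by (simp add: K0)
      then have "flat (aa_bracket A)" unfolding flat_def
        using \<open>?S = (\<lambda>v. 0)\<close> by (auto simp: CF zero_prod_def)
      with assms(3) show False by simp
    qed
    have "X \<bullet> ?M Z = 0" for X using h1[where a=0 and b=1 and X=X] M_sym[OF assms(1), of X Z] by simp
    then have MZ: "?M Z = 0" by (metis inner_eq_zero_iff)
    define w where "w = ?S Z"
    define t where "t = ?K Z \<bullet> w"
    define \<sigma> where "\<sigma> = w \<bullet> Z"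
    have h3: "(?S X \<bullet> Z) *\<^sub>R ?S Y = (?S Y \<bullet> Z) *\<^sub>R ?S X" for X Y
      using h2[where a=0 and b=0 and X=X and Y=Y] c0 by simp
    have h4: "\<sigma> *\<^sub>R ?S Y = (Y \<bullet> w) *\<^sub>R w" for Y
      using h3[of Z Y] unfolding \<sigma>_def w_def by (simp add: s1)
    have Kww: "?K w \<bullet> w = 0" using k1[of w w] by (simp add: inner_commute)
    have MZdef: "?M Z = ?S w + ?S (?K Z) - ?K w" unfolding MM_def w_def by simp
    have e1: "w \<bullet> w + 2 * t = 0"
    proof -
      have "?M Z \<bullet> Z = 0" using MZ by simp
      moreover have "?M Z \<bullet> Z = w \<bullet> w + 2 * t"
        unfolding MZdef t_def
        using s1[of w Z] s1[of "?K Z" Z] k1[of w Z] k1[of Z Z]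
        by (simp add: inner_add_left inner_diff_left inner_add_right inner_diff_right w_def inner_commute)
      ultimately show ?thesis by simp
    qed
    have e2: "\<sigma> * (?S w \<bullet> w + ?S (?K Z) \<bullet> w) = 0"
    proof -
      have "(?S w + ?S (?K Z) - ?K w) \<bullet> w = 0" using MZ unfolding MZdef by simp
      then have "?S w \<bullet> w + ?S (?K Z) \<bullet> w = 0" by (simp add: inner_add_left inner_diff_left Kww)
      then show ?thesis by simp
    qed
    have "\<sigma> * (?S w \<bullet> w) = (w \<bullet> w) * (w \<bullet> w)"
      using arg_cong[OF h4[of w], of "\<lambda>v. v \<bullet> w"] by simp
    moreover have "\<sigma> * (?S (?K Z) \<bullet> w) = t * (w \<bullet> w)"
      using arg_cong[OF h4[of "?K Z"], of "\<lambda>v. v \<bullet> w"] unfolding t_def by (simp add: inner_commute)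
    ultimately have e3: "(w \<bullet> w) * (w \<bullet> w) + t * (w \<bullet> w) = 0"
      using e2 by (simp add: distrib_left)
    have "w \<bullet> w = 0"
    proof (rule ccontr)
      assume ne: "w \<bullet> w \<noteq> 0"
      have "(w \<bullet> w + t) * (w \<bullet> w) = 0" using e3 by (simp add: distrib_right)
      then have "w \<bullet> w + t = 0" using ne by simp
      with e1 ne show False by simp
    qed
    then have w0: "w = 0" by simp
    have "?S (?K Z) = 0" using MZ unfolding MZdef w0 by (simp add: S0 K0)
    then show "z \<in> {(0, X) | X. ?S X = 0 \<and> ?S (?K X) = 0}"
      using zdef c0 w0 w_def by simp
  next
    fix z :: "real \<times> 'v" assume "z \<in> {(0, X) | X. ?S X = 0 \<and> ?S (?K X) = 0}"
    then obtain Z where zdef: "z = (0, Z)" and SZ: "?S Z = 0" and SKZ: "?S (?K Z) = 0" by blast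
    have MZ: "?M Z = 0" unfolding MM_def SZ SKZ by (simp add: S0 K0)
    have "curv (aa_bracket A) x y z = 0" for x y
    proof -
      obtain a X where x: "x = (a, X)" by (cases x)
      obtain b Y where y: "y = (b, Y)" by (cases y)
      show ?thesis unfolding x y zdef CF
        by (simp add: M_sym[OF assms(1)] MZ s1 SZ zero_prod_def)
    qed
    then show "z \<in> nullity0 (aa_bracket A)" unfolding nullity0_def by simp
  qed
qed

end
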